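(* Let $\mathfrak g$ be a finite-dimensional simple Lie algebra over $\mathbb R$ or $\mathbb C$ and let $T$ be a maximal Lie triple subsystem of $\mathfrak g$. Then either $T$ is a maximal subalgebra of $\mathfrak g$, or $\mathfrak g=[T,T]\oplus T$ is a nontrivial $\mathbb Z_2$-grading of $\mathfrak g$ with even part $[T,T]$ and odd part $T$.
   Context: A Lie algebra $\mathfrak g$ is regarded as a Lie triple system with triple product $[x,y,z]:=[[x,y],z]$. A Lie triple subsystem of $\mathfrak g$ is a vector subspace $T$ with $[[T,T],T]\subseteq T$. A maximal Lie triple subsystem is a proper Lie triple subsystem not properly contained in any other proper Lie triple subsystem. $[T,T]$ denotes the span of all brackets $[x,y]$, $x,y\in T$. *)

theory Defs
  imports Main "HOL.Complex"
begin

text \<open>A Lie algebra over a field 'k: the underlying vector space is the whole type 'a,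
  with scalar multiplication sc and bracket br.\<close>

definition field_iso :: "('k::field \<Rightarrow> 'l::field) \<Rightarrow> bool" where
  "field_iso f \<longleftrightarrow> bij f \<and> (\<forall>x y. f (x + y) = f x + f y) \<and>
     (\<forall>x y. f (x * y) = f x * f y) \<and> f 1 = 1"

definition real_or_complex_field :: "'k::field itself \<Rightarrow> bool" where
  "real_or_complex_field _ \<longleftrightarrow>
     (\<exists>f :: 'k \<Rightarrow> real. field_iso f) \<or> (\<exists>f :: 'k \<Rightarrow> complex. field_iso f)"

definition lie_algebra ::
  "('k::field \<Rightarrow> 'a::ab_group_add \<Rightarrow> 'a) \<Rightarrow> ('a \<Rightarrow> 'a \<Rightarrow> 'a) \<Rightarrow> bool" where
  "lie_algebra sc br \<longleftrightarrow> vector_space sc \<and>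
     (\<forall>x y z. br (x + y) z = br x z + br y z) \<and>
     (\<forall>x y z. br x (y + z) = br x y + br x z) \<and>
     (\<forall>c x y. br (sc c x) y = sc c (br x y)) \<and>
     (\<forall>c x y. br x (sc c y) = sc c (br x y)) \<and>
     (\<forall>x. br x x = 0) \<and>
     (\<forall>x y z. br x (br y z) + br y (br z x) + br z (br x y) = 0)"

definition fin_dim :: "('k::field \<Rightarrow> 'a::ab_group_add \<Rightarrow> 'a) \<Rightarrow> bool" where
  "fin_dim sc \<longleftrightarrow> (\<exists>B. finite B \<and> module.span sc B = UNIV)"

definition lie_ideal ::
  "('k::field \<Rightarrow> 'a::ab_group_add \<Rightarrow> 'a) \<Rightarrow> ('a \<Rightarrow> 'a \<Rightarrow> 'a) \<Rightarrow> 'a set \<Rightarrow> bool" where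
  "lie_ideal sc br I \<longleftrightarrow> module.subspace sc I \<and> (\<forall>x y. y \<in> I \<longrightarrow> br x y \<in> I)"

definition simple_lie_algebra ::
  "('k::field \<Rightarrow> 'a::ab_group_add \<Rightarrow> 'a) \<Rightarrow> ('a \<Rightarrow> 'a \<Rightarrow> 'a) \<Rightarrow> bool" where
  "simple_lie_algebra sc br \<longleftrightarrow> lie_algebra sc br \<and> (\<exists>x y. br x y \<noteq> 0) \<and>
     (\<forall>I. lie_ideal sc br I \<longrightarrow> I = {0} \<or> I = UNIV)"

definition lie_subalgebra ::
  "('k::field \<Rightarrow> 'a::ab_group_add \<Rightarrow> 'a) \<Rightarrow> ('a \<Rightarrow> 'a \<Rightarrow> 'a) \<Rightarrow> 'a set \<Rightarrow> bool" where
  "lie_subalgebra sc br S \<longleftrightarrow> module.subspace sc S \<and> (\<forall>x\<in>S. \<forall>y\<in>S. br x y \<in> S)"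

definition maximal_subalgebra ::
  "('k::field \<Rightarrow> 'a::ab_group_add \<Rightarrow> 'a) \<Rightarrow> ('a \<Rightarrow> 'a \<Rightarrow> 'a) \<Rightarrow> 'a set \<Rightarrow> bool" where
  "maximal_subalgebra sc br S \<longleftrightarrow> lie_subalgebra sc br S \<and> S \<noteq> UNIV \<and>
     (\<forall>S'. lie_subalgebra sc br S' \<and> S' \<noteq> UNIV \<and> S \<subseteq> S' \<longrightarrow> S' = S)"

definition lie_triple_subsystem ::
  "('k::field \<Rightarrow> 'a::ab_group_add \<Rightarrow> 'a) \<Rightarrow> ('a \<Rightarrow> 'a \<Rightarrow> 'a) \<Rightarrow> 'a set \<Rightarrow> bool" where
  "lie_triple_subsystem sc br T \<longleftrightarrow> module.subspace sc T \<and>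
     (\<forall>x\<in>T. \<forall>y\<in>T. \<forall>z\<in>T. br (br x y) z \<in> T)"

definition maximal_lts ::
  "('k::field \<Rightarrow> 'a::ab_group_add \<Rightarrow> 'a) \<Rightarrow> ('a \<Rightarrow> 'a \<Rightarrow> 'a) \<Rightarrow> 'a set \<Rightarrow> bool" where
  "maximal_lts sc br T \<longleftrightarrow> lie_triple_subsystem sc br T \<and> T \<noteq> UNIV \<and>
     (\<forall>T'. lie_triple_subsystem sc br T' \<and> T' \<noteq> UNIV \<and> T \<subseteq> T' \<longrightarrow> T' = T)"

definition bracket_span ::
  "('k::field \<Rightarrow> 'a::ab_group_add \<Rightarrow> 'a) \<Rightarrow> ('a \<Rightarrow> 'a \<Rightarrow> 'a) \<Rightarrow> 'a set \<Rightarrow> 'a set" where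
  "bracket_span sc br T = module.span sc {br x y | x y. x \<in> T \<and> y \<in> T}"

definition z2_grading ::
  "('k::field \<Rightarrow> 'a::ab_group_add \<Rightarrow> 'a) \<Rightarrow> ('a \<Rightarrow> 'a \<Rightarrow> 'a) \<Rightarrow> 'a set \<Rightarrow> 'a set \<Rightarrow> bool" where
  "z2_grading sc br Ev Od \<longleftrightarrow> module.subspace sc Ev \<and> module.subspace sc Od \<and>
     Ev \<inter> Od = {0} \<and> {x + y | x y. x \<in> Ev \<and> y \<in> Od} = UNIV \<and>
     (\<forall>x\<in>Ev. \<forall>y\<in>Ev. br x y \<in> Ev) \<and> (\<forall>x\<in>Ev. \<forall>y\<in>Od. br x y \<in> Od) \<and>
     (\<forall>x\<in>Od. \<forall>y\<in>Ev. br x y \<in> Od) \<and> (\<forall>x\<in>Od. \<forall>y\<in>Od. br x y \<in> Ev)"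

definition nontrivial_z2_grading ::
  "('k::field \<Rightarrow> 'a::ab_group_add \<Rightarrow> 'a) \<Rightarrow> ('a \<Rightarrow> 'a \<Rightarrow> 'a) \<Rightarrow> 'a set \<Rightarrow> 'a set \<Rightarrow> bool" where
  "nontrivial_z2_grading sc br Ev Od \<longleftrightarrow> z2_grading sc br Ev Od \<and> Od \<noteq> {0}"

end

theory Submission
  imports Defs
begin

theorem mainTheorem5:
  fixes sc :: "'k::field \<Rightarrow> 'a::ab_group_add \<Rightarrow> 'a"
    and br :: "'a \<Rightarrow> 'a \<Rightarrow> 'a"
    and T :: "'a set"
  assumes "real_or_complex_field TYPE('k)"
    and "simple_lie_algebra sc br"
    and "fin_dim sc"
    and "maximal_lts sc br T"
  shows "maximal_subalgebra sc br T \<or>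
         nontrivial_z2_grading sc br (bracket_span sc br T) T"
proof -
  have vs: "vector_space sc" using assms(2) unfolding simple_lie_algebra_def lie_algebra_def by auto
  interpret vector_space sc by (rule vs)
  have addl: "\<And>x y z. br (x + y) z = br x z + br y z"
    and addr: "\<And>x y z. br x (y + z) = br x y + br x z"
    and scl: "\<And>c x y. br (sc c x) y = sc c (br x y)"
    and scr: "\<And>c x y. br x (sc c y) = sc c (br x y)"
    and alt: "\<And>x. br x x = 0"
    and jac: "\<And>x y z. br x (br y z) + br y (br z x) + br z (br x y) = 0"
    using assms(2) unfolding simple_lie_algebra_def lie_algebra_def by auto
  have nonab: "\<exists>x y. br x y \<noteq> 0"
    and ideal: "\<And>I. subspace I \<Longrightarrow> (\<forall>x y. y \<in> I \<longrightarrow> br x y \<in> I) \<Longrightarrow> I = {0} \<or> I = UNIV"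
    using assms(2) unfolding simple_lie_algebra_def lie_ideal_def by auto
  have subT: "subspace T" and ltsT: "\<And>x y z. x \<in> T \<Longrightarrow> y \<in> T \<Longrightarrow> z \<in> T \<Longrightarrow> br (br x y) z \<in> T"
    and TU: "T \<noteq> UNIV"
    and maxT: "\<And>T'. lie_triple_subsystem sc br T' \<Longrightarrow> T' \<noteq> UNIV \<Longrightarrow> T \<subseteq> T' \<Longrightarrow> T' = T"
    using assms(4) unfolding maximal_lts_def lie_triple_subsystem_def by auto
  have br0l: "\<And>y. br 0 y = 0" using addl[of 0 0] by simp
  have br0r: "\<And>y. br y 0 = 0" using addr[of _ 0 0] by simp
  have anti: "\<And>x y. br y x = - br x y"
  proof -
    fix x y
    have "0 = br (x + y) (x + y)" by (rule alt[symmetric])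
    also have "\<dots> = br x x + br y x + (br x y + br y y)" by (simp only: addl addr)
    also have "\<dots> = br x y + br y x" by (simp add: alt add.commute)
    finally show "br y x = - br x y" by (metis add_eq_0_iff add.commute)
  qed
  have ext: "\<And>f S A a. subspace S \<Longrightarrow> (\<And>a. a \<in> A \<Longrightarrow> f a \<in> S) \<Longrightarrow>
      (\<And>x y. f (x + y) = f x + f y) \<Longrightarrow> (\<And>c x. f (sc c x) = sc c (f x)) \<Longrightarrow> a \<in> span A \<Longrightarrow> f a \<in> S"
  proof -
    fix f S A a
    assume S: "subspace S" and g: "\<And>a. a \<in> A \<Longrightarrow> f a \<in> S"
      and fa: "\<And>x y. f (x + y) = f x + f y" and fs: "\<And>c x. f (sc c x) = sc c (f x)"
      and a: "a \<in> span A"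
    have f0: "f 0 = 0" using fa[of 0 0] by simp
    have "subspace {a. f a \<in> S}"
      by (rule subspaceI) (auto simp: f0 fa fs S subspace_0 subspace_add subspace_scale)
    then have "span A \<subseteq> {a. f a \<in> S}" using g by (intro span_minimal) auto
    then show "f a \<in> S" using a by auto
  qed
  define G where "G = {br x y | x y. x \<in> T \<and> y \<in> T}"
  define h where "h = span G"
  have hdef: "bracket_span sc br T = h" unfolding h_def G_def bracket_span_def by simp
  have subh: "subspace h" unfolding h_def by simp
  have TTh: "\<And>x y. x \<in> T \<Longrightarrow> y \<in> T \<Longrightarrow> br x y \<in> h"
    unfolding h_def G_def by (rule span_base) auto
  have hT: "\<And>a t. a \<in> h \<Longrightarrow> t \<in> T \<Longrightarrow> br a t \<in> T"
  proof -
    fix a t assume a: "a \<in> h" and t: "t \<in> T"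
    show "br a t \<in> T"
      by (rule ext[where f="\<lambda>a. br a t" and A=G, OF subT])
        (use a t ltsT in \<open>auto simp: G_def h_def addl scl\<close>)
  qed
  have Th: "\<And>a t. a \<in> h \<Longrightarrow> t \<in> T \<Longrightarrow> br t a \<in> T"
    using hT anti subT subspace_neg by metis
  have hh: "\<And>a b. a \<in> h \<Longrightarrow> b \<in> h \<Longrightarrow> br a b \<in> h"
  proof -
    fix a b assume a: "a \<in> h" and b: "b \<in> h"
    have gen: "br a g \<in> h" if "g \<in> G" for g
    proof -
      obtain c d where g: "g = br c d" and c: "c \<in> T" and d: "d \<in> T"
        using \<open>g \<in> G\<close> unfolding G_def by auto
      have "br a (br c d) = - br c (br d a) - br d (br a c)"
        using jac[of a c d] by (simp add: algebra_simps eq_neg_iff_add_eq_0 add.assoc)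
      moreover have "br c (br d a) \<in> h" using TTh c Th[OF a d] by simp
      moreover have "br d (br a c) \<in> h" using TTh d hT[OF a c] by simp
      ultimately show ?thesis using g subh subspace_diff subspace_neg by metis
    qed
    show "br a b \<in> h"
      by (rule ext[where f="\<lambda>b. br a b" and A=G, OF subh])
        (use gen b in \<open>auto simp: h_def addr scr\<close>)
  qed
  define S where "S = {x + y | x y. x \<in> h \<and> y \<in> T}"
  have subS: "subspace S" unfolding S_def by (rule subspace_sums[OF subh subT])
  have TS: "T \<subseteq> S" unfolding S_def using subspace_0[OF subh] by force
  have hS: "h \<subseteq> S" unfolding S_def using subspace_0[OF subT] by force
  have SS: "\<And>x y. x \<in> S \<Longrightarrow> y \<in> S \<Longrightarrow> br x y \<in> S"
  proof -
    fix x y assume "x \<in> S" "y \<in> S"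
    then obtain a1 t1 a2 t2 where x: "x = a1 + t1" and y: "y = a2 + t2"
      and a1: "a1 \<in> h" and t1: "t1 \<in> T" and a2: "a2 \<in> h" and t2: "t2 \<in> T"
      unfolding S_def by auto
    have "br x y = (br a1 a2 + br t1 t2) + (br a1 t2 + br t1 a2)"
      unfolding x y by (simp add: addl addr algebra_simps)
    moreover have "br a1 a2 + br t1 t2 \<in> h" using hh[OF a1 a2] TTh[OF t1 t2] subh subspace_add by blast
    moreover have "br a1 t2 + br t1 a2 \<in> T" using hT[OF a1 t2] Th[OF a2 t1] subT subspace_add by blast
    ultimately show "br x y \<in> S" unfolding S_def by blast
  qed
  have ltsS: "lie_triple_subsystem sc br S"
    unfolding lie_triple_subsystem_def using subS SS by blast
  show ?thesis
  proof (cases "S = UNIV")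
    case False
    have ST: "S = T" using maxT[OF ltsS False TS] .
    have sa: "lie_subalgebra sc br T"
      unfolding lie_subalgebra_def using subT SS TS ST by blast
    have mx: "\<forall>S'. lie_subalgebra sc br S' \<and> S' \<noteq> UNIV \<and> T \<subseteq> S' \<longrightarrow> S' = T"
      using maxT unfolding lie_triple_subsystem_def lie_subalgebra_def by blast
    have "maximal_subalgebra sc br T"
      unfolding maximal_subalgebra_def using sa mx TU by blast
    then show ?thesis by simp
  next
    case True
    have "subspace (h \<inter> T)" using subh subT by (rule subspace_inter)
    moreover have "\<forall>x y. y \<in> h \<inter> T \<longrightarrow> br x y \<in> h \<inter> T"
    proof (intro allI impI)
      fix x y assume y: "y \<in> h \<inter> T"
      have "x \<in> S" using True by simp
      then obtain a t where x: "x = a + t" and a: "a \<in> h" and t: "t \<in> T" unfolding S_def by auto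
      have "br x y = br a y + br t y" unfolding x by (simp add: addl)
      moreover have "br a y \<in> h \<inter> T" using hh[OF a] hT[OF a] y by auto
      moreover have "br t y \<in> h \<inter> T" using TTh[OF t] Th[OF _ t] y by auto
      ultimately show "br x y \<in> h \<inter> T"
        using subspace_add subspace_inter[OF subh subT] by metis
    qed
    ultimately have "h \<inter> T = {0} \<or> h \<inter> T = UNIV" by (rule ideal)
    then have hT0: "h \<inter> T = {0}" using TU by auto
    have Tne: "T \<noteq> {0}"
    proof
      assume T0: "T = {0}"
      have "G = {0}" unfolding G_def T0 using br0l by auto
      then have "h = {0}" unfolding h_def by simp
      then have "S = {0}" unfolding S_def T0 by auto
      then have "x = 0" for x :: 'a using True by (metis UNIV_I singletonD)
      then show False using nonab by metis
    qed
    have "nontrivial_z2_grading sc br h T"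
    proof -
      have "{x + y | x y. x \<in> h \<and> y \<in> T} = UNIV" using True unfolding S_def .
      moreover have "\<forall>x\<in>h. \<forall>y\<in>h. br x y \<in> h" using hh by blast
      moreover have "\<forall>x\<in>h. \<forall>y\<in>T. br x y \<in> T" using hT by blast
      moreover have "\<forall>x\<in>T. \<forall>y\<in>h. br x y \<in> T" using Th by blast
      moreover have "\<forall>x\<in>T. \<forall>y\<in>T. br x y \<in> h" using TTh by blast
      ultimately show ?thesis
        unfolding nontrivial_z2_grading_def z2_grading_def
        using subh subT hT0 Tne by (intro conjI) assumption+
    qed
    then show ?thesis using hdef by simp
  qed
qed

end
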